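(* Let $n\geq 1$. There are infinitely many pairwise inequivalent $\mathbb{H}_{2n+1}$-structures on $\mathbb{P}V=\mathbb{P}^{2n+1}$ for which the central element $T$ fixes every point of the boundary and the induced $\mathbb{G}_a^{2n}$-structure on $\mathbb{P}\widetilde{V}$ is tautological. In particular, there are infinitely many pairwise inequivalent $\mathbb{H}_{2n+1}$-structures on $\mathbb{P}^{2n+1}$.
   Context: Work over $\mathbb{C}$. Let $\mathbb{W}$ be a $2n$-dimensional complex vector space with a non-degenerate skew-symmetric form $\omega$. The Heisenberg group $\mathbb{H}_{2n+1}$ is $\mathbb{W}\times\mathbb{C}$ with group law $(w_1,t_1)\cdot(w_2,t_2)=(w_1+w_2,\,t_1+t_2+\tfrac12\omega(w_1,w_2))$. Let $T=(0,1)$ and let $\mathbb{I}=\mathbb{C}T$ be its (one-dimensional) center; $\mathbb{H}_{2n+1}/\mathbb{I}\cong\mathbb{G}_a^{2n}$. Let $V\cong\mathbb{C}^{2n+2}$. An $\mathbb{H}_{2n+1}$-structure on $\mathbb{P}V$ is an effective algebraic action of $\mathbb{H}_{2n+1}$ on $\mathbb{P}V$ (generic stabilizer trivial) with a dense open orbit; the boundary (complement of the open orbit) is a hyperplane $\mathbb{P}V'$, $V'\subset V$ of dimension $2n+1$. Two actions $\alpha_i:G_i\times X_i\to X_i$ ($i=1,2$) are equivalent if there are a group isomorphism $\phi:G_1\to G_2$ and a variety isomorphism $\psi:X_1\to X_2$ with $\psi(\alpha_1(g,x))=\alpha_2(\phi(g),\psi(x))$ for all $g,x$. For a point $o$ of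 the open orbit, $\overline{\mathbb{I}\cdot o}$ is a projective line and $v$ denotes the point $\overline{\mathbb{I}\cdot o}\setminus\mathbb{I}\cdot o$; let $\hat v\in V$ represent $v$ and $\widetilde V=V/\mathbb{C}\hat v$. When $T$ fixes every point of $\mathbb{P}V'$, the action of $\mathbb{H}_{2n+1}$ descends (compatibly with the linear projection $\mathbb{P}V\dashrightarrow\mathbb{P}\widetilde V$) to an action of $\mathbb{H}_{2n+1}/\mathbb{I}\cong\mathbb{G}_a^{2n}$ on $\mathbb{P}\widetilde V\cong\mathbb{P}^{2n}$, called the induced $\mathbb{G}_a^{2n}$-structure. A $\mathbb{G}_a^{2n}$-structure on $\mathbb{P}^{2n}$ is tautological if (after identifying the group with $\mathbb{C}^{2n}$ and choosing homogeneous coordinates) it is $(a_1,\dots,a_{2n})\cdot[z_0,z_1,\dots,z_{2n}]=[z_0,z_1+a_1z_0,\dots,z_{2n}+a_{2n}z_0]$. *)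

theory Defs
  imports "HOL-Analysis.Analysis"
begin

text \<open>Any non-degenerate skew form
  is isomorphic to this one.\<close>

type_synonym 'n wsp = "(complex^'n::finite) \<times> (complex^'n)"
type_synonym 'n heis = "('n::finite) wsp \<times> complex"

definition wadd :: "('n::finite) wsp \<Rightarrow> ('n::finite) wsp \<Rightarrow> ('n::finite) wsp" where
  "wadd w1 w2 = (fst w1 + fst w2, snd w1 + snd w2)"

definition wscale :: "complex \<Rightarrow> ('n::finite) wsp \<Rightarrow> ('n::finite) wsp" where
  "wscale c w = (c *s fst w, c *s snd w)"

definition wzero :: "('n::finite) wsp" where
  "wzero = (0, 0)"

definition omega :: "('n::finite) wsp \<Rightarrow> ('n::finite) wsp \<Rightarrow> complex" where
  "omega w1 w2 = (\<Sum>i\<in>UNIV. fst w1 $ i * snd w2 $ i - snd w1 $ i * fst w2 $ i)"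

definition hmul :: "('n::finite) heis \<Rightarrow> ('n::finite) heis \<Rightarrow> ('n::finite) heis" where
  "hmul g h = (wadd (fst g) (fst h), snd g + snd h + omega (fst g) (fst h) / 2)"

definition hunit :: "('n::finite) heis" where
  "hunit = (wzero, 0)"

definition hT :: "('n::finite) heis" where
  "hT = (wzero, 1)"

inductive polyfn :: "('a \<Rightarrow> complex) set \<Rightarrow> ('a \<Rightarrow> complex) \<Rightarrow> bool" for C where
  coord: "c \<in> C \<Longrightarrow> polyfn C c"
| const: "polyfn C (\<lambda>_. a)"
| add: "polyfn C f \<Longrightarrow> polyfn C g \<Longrightarrow> polyfn C (\<lambda>x. f x + g x)"
| mult: "polyfn C f \<Longrightarrow> polyfn C g \<Longrightarrow> polyfn C (\<lambda>x. f x * g x)"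

definition heis_coords :: "(('n::finite) heis \<Rightarrow> complex) set" where
  "heis_coords = {(\<lambda>g. fst (fst g) $ i) | i. True} \<union> {(\<lambda>g. snd (fst g) $ i) | i. True} \<union> {snd}"

definition vec_coords :: "(complex^('v::finite) \<Rightarrow> complex) set" where
  "vec_coords = {(\<lambda>v. v $ i) | i. True}"

definition hom_poly :: "(complex^('v::finite) \<Rightarrow> complex) \<Rightarrow> bool" where
  "hom_poly f \<longleftrightarrow> polyfn vec_coords f \<and> (\<exists>d::nat. \<forall>c v. f (c *s v) = c ^ d * f v)"

definition line :: "complex^('v::finite) \<Rightarrow> (complex^('v::finite)) set" where
  "line v = {c *s v | c. True}"

definition proj_space :: "(complex^('v::finite)) set set" where
  "proj_space = {line v | v. v \<noteq> 0}"

definition zclosed :: "(complex^('v::finite)) set set \<Rightarrow> bool" where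
  "zclosed S \<longleftrightarrow> (\<exists>F. (\<forall>f\<in>F. hom_poly f) \<and>
      S = {line v | v. v \<noteq> 0 \<and> (\<forall>f\<in>F. f v = 0)})"

definition zopen :: "(complex^('v::finite)) set set \<Rightarrow> bool" where
  "zopen U \<longleftrightarrow> U \<subseteq> proj_space \<and> zclosed (proj_space - U)"

definition zclosure :: "(complex^('v::finite)) set set \<Rightarrow> (complex^('v::finite)) set set" where
  "zclosure S = \<Inter> {C. zclosed C \<and> S \<subseteq> C}"

definition zdense :: "(complex^('v::finite)) set set \<Rightarrow> bool" where
  "zdense S \<longleftrightarrow> zclosure S = proj_space"

type_synonym ('n, 'v) haction = "('n::finite) heis \<Rightarrow> (complex^('v::finite)) set \<Rightarrow> (complex^('v::finite)) set"

text \<open>Since H is an affine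
  space, every morphism H -> PGL(V) = Aut(P(V)) lifts to such a matrix family.\<close>
definition alg_action :: "('n::finite, 'v::finite) haction \<Rightarrow> bool" where
  "alg_action \<alpha> \<longleftrightarrow>
     (\<exists>\<rho> :: 'n heis \<Rightarrow> complex^('v::finite)^'v.
        (\<forall>i j. polyfn heis_coords (\<lambda>g. \<rho> g $ i $ j)) \<and>
        (\<forall>g. invertible (\<rho> g)) \<and>
        (\<forall>g v. v \<noteq> 0 \<longrightarrow> \<alpha> g (line v) = line (\<rho> g *v v))) \<and>
     (\<forall>x\<in>proj_space. \<alpha> hunit x = x) \<and>
     (\<forall>g h x. x \<in> proj_space \<longrightarrow> \<alpha> (hmul g h) x = \<alpha> g (\<alpha> h x))"

definition orbit :: "('n::finite, 'v::finite) haction \<Rightarrow> (complex^('v::finite)) set \<Rightarrow> (complex^('v::finite)) set set" where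
  "orbit \<alpha> x = range (\<lambda>g. \<alpha> g x)"

definition stab_trivial :: "('n::finite, 'v::finite) haction \<Rightarrow> (complex^('v::finite)) set \<Rightarrow> bool" where
  "stab_trivial \<alpha> x \<longleftrightarrow> (\<forall>g. \<alpha> g x = x \<longrightarrow> g = hunit)"

text \<open>H_{2n+1}-structure: effective algebraic action (generic stabilizer trivial, i.e.
  trivial on a nonempty Zariski open set) with a dense open orbit.\<close>
definition H_structure :: "('n::finite, 'v::finite) haction \<Rightarrow> bool" where
  "H_structure \<alpha> \<longleftrightarrow> alg_action \<alpha> \<and>
     (\<exists>U. zopen U \<and> U \<noteq> {} \<and> (\<forall>x\<in>U. stab_trivial \<alpha> x)) \<and>
     (\<exists>x0\<in>proj_space. zopen (orbit \<alpha> x0) \<and> zdense (orbit \<alpha> x0))"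

definition T_fixes_boundary :: "('n::finite, 'v::finite) haction \<Rightarrow> bool" where
  "T_fixes_boundary \<alpha> \<longleftrightarrow>
     (\<forall>x0\<in>proj_space. zopen (orbit \<alpha> x0) \<longrightarrow>
        (\<forall>x \<in> proj_space - orbit \<alpha> x0. \<alpha> hT x = x))"

definition clinear_W :: "(('n::finite) wsp \<Rightarrow> ('n::finite) wsp) \<Rightarrow> bool" where
  "clinear_W L \<longleftrightarrow> (\<forall>a b u w. L (wadd (wscale a u) (wscale b w)) = wadd (wscale a (L u)) (wscale b (L w)))"

definition clinear_VW :: "(complex^('v::finite) \<Rightarrow> complex \<times> ('n::finite) wsp) \<Rightarrow> bool" where
  "clinear_VW p \<longleftrightarrow> (\<forall>a b u w.
      p (a *s u + b *s w) = (a * fst (p u) + b * fst (p w), wadd (wscale a (snd (p u))) (wscale b (snd (p w)))))"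

text \<open>For o in the open orbit,
  the closure of I.o minus I.o is a single point v = [vh]; p : V -> C x W is a linear
  surjection with kernel C vh (i.e. homogeneous coordinates [z0, z] on P(V/C vh)),
  L : W -> W a linear identification of H/I = W with C^{2n}, and the action of
  g = (w,t) on P(V) covers [z0, z] |-> [z0, z + L(w) z0].\<close>
definition induced_tautological :: "('n::finite, 'v::finite) haction \<Rightarrow> bool" where
  "induced_tautological \<alpha> \<longleftrightarrow>
     (\<forall>x0\<in>proj_space. zopen (orbit \<alpha> x0) \<longrightarrow>
       (\<exists>vh. vh \<noteq> 0 \<and>
          zclosure (range (\<lambda>s. \<alpha> (wzero, s) x0)) - range (\<lambda>s. \<alpha> (wzero, s) x0) = {line vh} \<and>
          (\<exists>p L. clinear_VW p \<and> surj p \<and> (\<forall>u. p u = (0, wzero) \<longleftrightarrow> u \<in> line vh) \<and>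
                 clinear_W L \<and> bij L \<and>
                 (\<forall>w t u u'. u \<notin> line vh \<longrightarrow> \<alpha> (w, t) (line u) = line u' \<longrightarrow>
                     (\<exists>c. c \<noteq> 0 \<and> p u' = (c * fst (p u),
                          wscale c (wadd (snd (p u)) (wscale (fst (p u)) (L w)))))))))"

text \<open>Variety automorphisms of P(V) are exactly the projective linear transformations.\<close>
definition equiv_action :: "('n::finite, 'v::finite) haction \<Rightarrow> ('n::finite, 'v::finite) haction \<Rightarrow> bool" where
  "equiv_action \<alpha>1 \<alpha>2 \<longleftrightarrow>
     (\<exists>\<phi> P. bij \<phi> \<and> (\<forall>g h. \<phi> (hmul g h) = hmul (\<phi> g) (\<phi> h)) \<and>
        invertible (P :: complex^('v::finite)^'v) \<and>
        (\<forall>g x. x \<in> proj_space \<longrightarrow> (\<lambda>u. P *v u) ` (\<alpha>1 g x) = \<alpha>2 (\<phi> g) ((\<lambda>u. P *v u) ` x)))"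

end

theory Submission
  imports Defs
begin


lemma cont_zero_at0:
  fixes h :: "complex \<Rightarrow> complex"
  assumes c: "continuous_on UNIV h" and z: "\<And>e. e \<noteq> 0 \<Longrightarrow> h e = 0"
  shows "h 0 = 0"
proof -
  have "isCont h 0" using c by (simp add: continuous_on_eq_continuous_at)
  moreover have "(\<lambda>n. 1 / of_nat (Suc n) :: complex) \<longlonglongrightarrow> 0"
    using LIMSEQ_Suc[OF lim_1_over_n] by simp
  ultimately have "(\<lambda>n. h (1 / of_nat (Suc n))) \<longlonglongrightarrow> h 0"
    using isCont_tendsto_compose by blast
  moreover have "(\<lambda>n. h (1 / of_nat (Suc n))) = (\<lambda>n. 0)"
    by (intro ext z) (simp del: of_nat_Suc)
  ultimately show ?thesis using LIMSEQ_unique by (metis tendsto_const)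
qed

datatype 'n ix = Z0 | X 'n | Y 'n | Sx

lemma ix_UNIV: "(UNIV :: 'a ix set) = {Z0, Sx} \<union> range X \<union> range Y"
  by (auto, case_tac x, auto)

instance ix :: (finite) finite
  by standard (simp add: ix_UNIV)

lemma card_ix: "CARD(('n::finite) ix) = 2 * CARD('n) + 2"
proof -
  have "card ({Z0, Sx} \<union> range X \<union> range (Y :: 'n \<Rightarrow> 'n ix)) = card ({Z0, Sx} \<union> range (X :: 'n \<Rightarrow> 'n ix)) + card (range (Y :: 'n \<Rightarrow> 'n ix))"
    by (rule card_Un_disjoint) auto
  also have "card ({Z0, Sx} \<union> range (X :: 'n \<Rightarrow> 'n ix)) = card {Z0, Sx :: 'n ix} + card (range (X :: 'n \<Rightarrow> 'n ix))"
    by (rule card_Un_disjoint) auto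
  also have "card (range (X :: 'n \<Rightarrow> 'n ix)) = CARD('n)" by (simp add: card_image inj_def)
  also have "card (range (Y :: 'n \<Rightarrow> 'n ix)) = CARD('n)" by (simp add: card_image inj_def)
  finally show ?thesis by (simp add: ix_UNIV)
qed

section \<open>polynomial functions\<close>

lemma polyfn_diff: "polyfn C f \<Longrightarrow> polyfn C g \<Longrightarrow> polyfn C (\<lambda>x. f x - g x)"
proof -
  assume "polyfn C f" "polyfn C g"
  then have "polyfn C (\<lambda>x. f x + (\<lambda>_. -1) x * g x)"
    by (intro polyfn.add polyfn.mult polyfn.const)
  then show ?thesis by simp
qed

lemma polyfn_sum: "finite S \<Longrightarrow> (\<And>i. i \<in> S \<Longrightarrow> polyfn C (h i)) \<Longrightarrow> polyfn C (\<lambda>x. \<Sum>i\<in>S. h i x)"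
proof (induction S rule: finite_induct)
  case empty
  then show ?case using polyfn.const[of C 0] by simp
next
  case (insert a F)
  then show ?case by (simp add: polyfn.add)
qed

lemma polyfn_cont: "polyfn vec_coords f \<Longrightarrow> continuous_on UNIV f"
proof (induction rule: polyfn.induct)
  case (coord c)
  then show ?case by (auto simp: vec_coords_def intro!: continuous_intros)
next
  case (const a)
  then show ?case by (simp add: continuous_on_const)
next
  case (add f g)
  then show ?case by (intro continuous_intros)
next
  case (mult f g)
  then show ?case by (intro continuous_intros)
qed

lemma hc_x: "polyfn heis_coords (\<lambda>g. fst (fst g) $ i)"
  by (rule polyfn.coord) (auto simp: heis_coords_def)
lemma hc_y: "polyfn heis_coords (\<lambda>g. snd (fst g) $ i)"
  by (rule polyfn.coord) (auto simp: heis_coords_def)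
lemma hc_t: "polyfn heis_coords (\<lambda>g. snd g)"
  by (rule polyfn.coord) (auto simp: heis_coords_def)

lemma hom_poly_coord: "hom_poly (\<lambda>v. v $ k)"
  unfolding hom_poly_def
  by (auto intro!: polyfn.coord exI[of _ 1] simp: vec_coords_def)

lemma hom_poly_lin2: "hom_poly (\<lambda>v. v $ k * a - b * v $ l)"
proof -
  have "polyfn vec_coords (\<lambda>v. v $ k * a - b * v $ l)"
    by (intro polyfn_diff polyfn.mult polyfn.const polyfn.coord) (auto simp: vec_coords_def)
  moreover have "\<forall>c v. (c *s v) $ k * a - b * (c *s v) $ l = c ^ 1 * (v $ k * a - b * v $ l)"
    by (simp add: algebra_simps)
  ultimately show ?thesis unfolding hom_poly_def by blast
qed

lemma hom_poly_cont: "hom_poly f \<Longrightarrow> continuous_on UNIV f"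
  unfolding hom_poly_def using polyfn_cont by blast

lemma mem_line: "x \<in> line v \<longleftrightarrow> (\<exists>c. x = c *s v)"
  by (auto simp: line_def)

lemma self_in_line: "v \<in> line v"
  unfolding mem_line by (rule exI[of _ 1]) simp

lemma line_zero: "line 0 = {0}"
  by (auto simp: line_def)

lemma line_image:
  assumes "\<And>c v. F (c *s v) = c *s F v"
  shows "F ` line v = line (F v)"
proof
  show "F ` line v \<subseteq> line (F v)" using assms by (auto simp: line_def)
  show "line (F v) \<subseteq> F ` line v"
  proof
    fix x assume "x \<in> line (F v)"
    then obtain c where "x = c *s F v" by (auto simp: mem_line)
    then have "x = F (c *s v)" using assms by simp
    moreover have "c *s v \<in> line v" by (auto simp: mem_line)
    ultimately show "x \<in> F ` line v" by blast
  qed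
qed

lemma line_eq:
  assumes "line u = line v" "v \<noteq> 0"
  shows "\<exists>c. c \<noteq> 0 \<and> u = c *s v"
proof -
  from assms(1) self_in_line[of u] obtain c where c: "u = c *s v" by (auto simp: mem_line)
  show ?thesis
  proof (cases "c = 0")
    case True
    then have "u = 0" using c by simp
    then have "v \<in> {0}" using assms(1) self_in_line[of v] by (simp add: line_zero)
    then show ?thesis using assms(2) by simp
  qed (use c in auto)
qed

lemma line_smult: assumes "c \<noteq> 0" shows "line (c *s v) = line v"
proof (rule set_eqI)
  fix x
  show "x \<in> line (c *s v) \<longleftrightarrow> x \<in> line v"
    unfolding mem_line
  proof
    assume "\<exists>d. x = d *s (c *s v)"
    then obtain d where "x = d *s (c *s v)" by blast
    then have "x = (d * c) *s v" by (simp add: vector_smult_assoc)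
    then show "\<exists>d. x = d *s v" by blast
  next
    assume "\<exists>d. x = d *s v"
    then obtain d where "x = d *s v" by blast
    then have "x = (d / c) *s (c *s v)" using assms by (simp add: vector_smult_assoc)
    then show "\<exists>d. x = d *s (c *s v)" by blast
  qed
qed

lemma line_eq_iff: "v \<noteq> 0 \<Longrightarrow> line u = line v \<longleftrightarrow> (\<exists>c. c \<noteq> 0 \<and> u = c *s v)"
  using line_eq line_smult by metis

definition ZS :: "(complex^('v::finite) \<Rightarrow> complex) set \<Rightarrow> (complex^'v) set set" where
  "ZS F = {line v | v. v \<noteq> 0 \<and> (\<forall>f\<in>F. f v = 0)}"

lemma zclosed_ZS: "(\<And>f. f \<in> F \<Longrightarrow> hom_poly f) \<Longrightarrow> zclosed (ZS F)"
  unfolding zclosed_def ZS_def by blast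

lemma zclosedE: "zclosed C \<Longrightarrow> (\<And>F. (\<And>f. f \<in> F \<Longrightarrow> hom_poly f) \<Longrightarrow> C = ZS F \<Longrightarrow> P) \<Longrightarrow> P"
  unfolding zclosed_def ZS_def by blast

lemma ZS_mem:
  assumes F: "\<And>f. f \<in> F \<Longrightarrow> hom_poly f" and u: "u \<noteq> 0"
  shows "line u \<in> ZS F \<longleftrightarrow> (\<forall>f\<in>F. f u = 0)"
proof
  assume "line u \<in> ZS F"
  then obtain v where v: "line u = line v" "v \<noteq> 0" "\<forall>f\<in>F. f v = 0" by (auto simp: ZS_def)
  then obtain c where c: "u = c *s v" using line_eq by blast
  show "\<forall>f\<in>F. f u = 0"
  proof
    fix f assume "f \<in> F"
    then obtain d where "\<forall>c v. f (c *s v) = c ^ d * f v" using F unfolding hom_poly_def by blast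
    then show "f u = 0" using c v(3) \<open>f \<in> F\<close> by simp
  qed
next
  assume "\<forall>f\<in>F. f u = 0"
  then show "line u \<in> ZS F" using u by (auto simp: ZS_def)
qed

lemma proj_spaceE: "x \<in> proj_space \<Longrightarrow> (\<And>v. v \<noteq> 0 \<Longrightarrow> x = line v \<Longrightarrow> P) \<Longrightarrow> P"
  unfolding proj_space_def by blast

lemma proj_space_ZS: "proj_space = ZS {}"
  by (simp add: proj_space_def ZS_def)

lemma ZS_sub_proj: "ZS F \<subseteq> proj_space"
  by (auto simp: proj_space_def ZS_def)

lemma zclosed_sub_proj: "zclosed C \<Longrightarrow> C \<subseteq> proj_space"
  using ZS_sub_proj zclosedE by metis

lemma zclosure_sub_proj: "S \<subseteq> proj_space \<Longrightarrow> zclosure S \<subseteq> proj_space"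
proof -
  have "zclosed (proj_space :: (complex^'a) set set)" unfolding proj_space_ZS by (rule zclosed_ZS) simp
  moreover assume "S \<subseteq> proj_space"
  ultimately show ?thesis unfolding zclosure_def by blast
qed



section \<open>symplectic algebra\<close>

definition i0 :: "'n::finite" where "i0 = undefined"

definition Sf :: "complex \<Rightarrow> ('n::finite) wsp \<Rightarrow> 'n wsp \<Rightarrow> complex" where
  "Sf \<mu> w z = \<mu> / 2 * (fst w $ i0 * snd z $ i0 + snd w $ i0 * fst z $ i0)"

definition Bf :: "complex \<Rightarrow> ('n::finite) wsp \<Rightarrow> 'n wsp \<Rightarrow> complex" where
  "Bf \<mu> w z = omega w z / 2 + Sf \<mu> w z"

definition aa :: "complex \<Rightarrow> ('n::finite) heis \<Rightarrow> complex" where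
  "aa \<mu> g = snd g + Sf \<mu> (fst g) (fst g) / 2"

definition hinv :: "('n::finite) heis \<Rightarrow> 'n heis" where
  "hinv g = (wscale (-1) (fst g), - snd g)"

lemma omega_add1: "omega (wadd a b) c = omega a c + omega b c"
  by (simp add: omega_def wadd_def algebra_simps sum.distrib sum_subtractf)
lemma omega_add2: "omega c (wadd a b) = omega c a + omega c b"
  by (simp add: omega_def wadd_def algebra_simps sum.distrib sum_subtractf)
lemma omega_scale1: "omega (wscale k a) b = k * omega a b"
  by (simp add: omega_def wscale_def algebra_simps sum_distrib_left sum_subtractf)
lemma omega_scale2: "omega a (wscale k b) = k * omega a b"
  by (simp add: omega_def wscale_def algebra_simps sum_distrib_left sum_subtractf)
lemma omega_self: "omega a a = 0"
  by (simp add: omega_def mult.commute)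
lemma omega_anti: "omega b a = - omega a b"
  by (simp add: omega_def algebra_simps sum_subtractf mult.commute)
lemma omega_zero1[simp]: "omega wzero a = 0"
  by (simp add: omega_def wzero_def)
lemma omega_zero2[simp]: "omega a wzero = 0"
  by (simp add: omega_def wzero_def)

lemma Sf_add1: "Sf m (wadd a b) c = Sf m a c + Sf m b c"
  by (simp add: Sf_def wadd_def algebra_simps)
lemma Sf_add2: "Sf m c (wadd a b) = Sf m c a + Sf m c b"
  by (simp add: Sf_def wadd_def algebra_simps)
lemma Sf_scale1: "Sf m (wscale k a) b = k * Sf m a b"
  by (simp add: Sf_def wscale_def algebra_simps)
lemma Sf_scale2: "Sf m a (wscale k b) = k * Sf m a b"
  by (simp add: Sf_def wscale_def algebra_simps)
lemma Sf_sym: "Sf m a b = Sf m b a"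
  by (simp add: Sf_def algebra_simps)
lemma Sf_zero1[simp]: "Sf m wzero a = 0"
  by (simp add: Sf_def wzero_def)
lemma Sf_zero2[simp]: "Sf m a wzero = 0"
  by (simp add: Sf_def wzero_def)

lemmas Bf_lin = Bf_def omega_add1 omega_add2 omega_scale1 omega_scale2 Sf_add1 Sf_add2 Sf_scale1 Sf_scale2

lemma Bf_zero1[simp]: "Bf m wzero a = 0" by (simp add: Bf_def)
lemma Bf_zero2[simp]: "Bf m a wzero = 0" by (simp add: Bf_def)

lemma aa_hmul: "aa m (hmul g h) = aa m g + aa m h + Bf m (fst g) (fst h)"
  by (simp add: aa_def hmul_def Bf_def Sf_def wadd_def field_simps)

lemma hmul_hinv1: "hmul g (hinv g) = hunit"
proof -
  have "omega (fst g) (wscale (-1) (fst g)) = 0" by (simp add: omega_scale2 omega_self)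
  moreover have "wadd (fst g) (wscale (-1) (fst g)) = wzero"
    by (simp add: wadd_def wscale_def wzero_def vec_eq_iff)
  ultimately show ?thesis by (simp add: hmul_def hinv_def hunit_def)
qed
lemma hmul_hinv2: "hmul (hinv g) g = hunit"
proof -
  have "omega (wscale (-1) (fst g)) (fst g) = 0" by (simp add: omega_scale1 omega_self)
  moreover have "wadd (wscale (-1) (fst g)) (fst g) = wzero"
    by (simp add: wadd_def wscale_def wzero_def vec_eq_iff)
  ultimately show ?thesis by (simp add: hmul_def hinv_def hunit_def)
qed

lemma fst_hmul: "fst (hmul g h) = wadd (fst g) (fst h)" by (simp add: hmul_def)
lemma fst_wadd[simp]: "fst (wadd a b) = fst a + fst b" by (simp add: wadd_def)
lemma snd_wadd[simp]: "snd (wadd a b) = snd a + snd b" by (simp add: wadd_def)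
lemma fst_wscale[simp]: "fst (wscale c a) = c *s fst a" by (simp add: wscale_def)
lemma snd_wscale[simp]: "snd (wscale c a) = c *s snd a" by (simp add: wscale_def)
lemma fst_wzero[simp]: "fst wzero = 0" by (simp add: wzero_def)
lemma snd_wzero[simp]: "snd wzero = 0" by (simp add: wzero_def)

lemma fst_hunit[simp]: "fst hunit = wzero" by (simp add: hunit_def)
lemma snd_hunit[simp]: "snd hunit = 0" by (simp add: hunit_def)
lemma aa_hunit[simp]: "aa m hunit = 0" by (simp add: aa_def)

section \<open>coordinates\<close>

locale hc =
  fixes f :: "'v::finite \<Rightarrow> 'n::finite ix"
  assumes bijf: "bij f"
begin

definition co :: "complex^'v \<Rightarrow> 'n ix \<Rightarrow> complex" where "co v j = v $ inv f j"
definition mk :: "('n ix \<Rightarrow> complex) \<Rightarrow> complex^'v" where "mk c = (\<chi> k. c (f k))"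

lemma co_mk[simp]: "co (mk c) j = c j"
  using bijf by (simp add: co_def mk_def bij_def surj_f_inv_f)

lemma vec_co: "v $ k = co v (f k)"
  using bijf by (simp add: co_def bij_def inv_f_f)

lemma vec_eq_co: "(\<And>j. co u j = co v j) \<Longrightarrow> u = v"
  by (simp add: vec_eq_iff vec_co)

lemma co_add[simp]: "co (u + v) j = co u j + co v j" by (simp add: co_def)
lemma co_diff[simp]: "co (u - v) j = co u j - co v j" by (simp add: co_def)
lemma co_smult[simp]: "co (c *s v) j = c * co v j" by (simp add: co_def)
lemma co_zero[simp]: "co 0 j = 0" by (simp add: co_def)
lemma co_sum: "co (sum h S) j = (\<Sum>x\<in>S. co (h x) j)" by (simp add: co_def)

lemma hom_poly_co: "hom_poly (\<lambda>v. co v j)"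
  unfolding co_def by (rule hom_poly_coord)

definition zp :: "complex^'v \<Rightarrow> 'n wsp" where "zp v = ((\<chi> i. co v (X i)), (\<chi> i. co v (Y i)))"

lemma zp_add: "zp (u + v) = wadd (zp u) (zp v)"
  by (simp add: zp_def wadd_def vec_eq_iff)
lemma zp_smult: "zp (c *s v) = wscale c (zp v)"
  by (simp add: zp_def wscale_def vec_eq_iff)
lemma fst_zp[simp]: "fst (zp v) $ i = co v (X i)" by (simp add: zp_def)
lemma snd_zp[simp]: "snd (zp v) $ i = co v (Y i)" by (simp add: zp_def)

definition A :: "complex \<Rightarrow> 'n heis \<Rightarrow> complex^'v \<Rightarrow> complex^'v" where
  "A m g v = mk (\<lambda>j. case j of Z0 \<Rightarrow> co v Z0
     | X i \<Rightarrow> co v (X i) + co v Z0 * fst (fst g) $ i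
     | Y i \<Rightarrow> co v (Y i) + co v Z0 * snd (fst g) $ i
     | Sx \<Rightarrow> co v Sx + co v Z0 * aa m g + Bf m (fst g) (zp v))"

lemma A_co[simp]:
  "co (A m g v) Z0 = co v Z0"
  "co (A m g v) (X i) = co v (X i) + co v Z0 * fst (fst g) $ i"
  "co (A m g v) (Y i) = co v (Y i) + co v Z0 * snd (fst g) $ i"
  "co (A m g v) Sx = co v Sx + co v Z0 * aa m g + Bf m (fst g) (zp v)"
  by (simp_all add: A_def)

lemma zp_A: "zp (A m g v) = wadd (zp v) (wscale (co v Z0) (fst g))"
  by (simp add: zp_def wadd_def wscale_def vec_eq_iff)

lemma A_add: "A m g (u + v) = A m g u + A m g v"
  by (rule vec_eq_co, case_tac j) (simp_all add: zp_add Bf_lin algebra_simps)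

lemma A_smult: "A m g (c *s v) = c *s A m g v"
  by (rule vec_eq_co, case_tac j) (simp_all add: zp_smult Bf_lin algebra_simps)

lemma A_zero[simp]: "A m g 0 = 0"
  using A_smult[of m g 0 0] by simp

lemma A_sum: "finite S \<Longrightarrow> A m g (sum h S) = (\<Sum>x\<in>S. A m g (h x))"
  by (induction S rule: finite_induct) (simp_all add: A_add)

lemma A_hunit[simp]: "A m hunit v = v"
  by (rule vec_eq_co, case_tac j) simp_all

lemma A_hmul: "A m (hmul g h) v = A m g (A m h v)"
  by (rule vec_eq_co, case_tac j)
     (simp_all add: zp_A aa_hmul Bf_lin algebra_simps fst_hmul add_divide_distrib)

lemma A_inv1[simp]: "A m (hinv g) (A m g v) = v"
  using A_hmul[of m "hinv g" g v] by (simp add: hmul_hinv2)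
lemma A_inv2[simp]: "A m g (A m (hinv g) v) = v"
  using A_hmul[of m g "hinv g" v] by (simp add: hmul_hinv1)

lemma A_nonzero: "v \<noteq> 0 \<Longrightarrow> A m g v \<noteq> 0"
  using A_inv1[of m g v] by force

end


lemma polyfn_divc: "polyfn C g \<Longrightarrow> polyfn C (\<lambda>x. g x / c)"
proof -
  assume "polyfn C g"
  then have "polyfn C (\<lambda>x. g x * (\<lambda>_. 1 / c) x)" by (intro polyfn.mult polyfn.const)
  then show ?thesis by simp
qed

lemma polyfn_omega: "polyfn heis_coords (\<lambda>g. omega (fst g) z)"
  unfolding omega_def
  by (intro polyfn_sum polyfn_diff polyfn.mult polyfn.const hc_x hc_y) simp

lemma polyfn_Sf: "polyfn heis_coords (\<lambda>g. Sf m (fst g) z)"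
  unfolding Sf_def
  by (intro polyfn.add polyfn.mult polyfn.const hc_x hc_y)

lemma polyfn_Sf2: "polyfn heis_coords (\<lambda>g. Sf m (fst g) (fst g))"
  unfolding Sf_def
  by (intro polyfn.add polyfn.mult polyfn.const hc_x hc_y)

lemma polyfn_aa: "polyfn heis_coords (\<lambda>g. aa m g)"
  unfolding aa_def
  by (intro polyfn.add polyfn_divc polyfn_Sf2 hc_t)

lemma polyfn_Bf: "polyfn heis_coords (\<lambda>g. Bf m (fst g) z)"
  unfolding Bf_def
  by (intro polyfn.add polyfn_divc polyfn_Sf polyfn_omega)

context hc
begin

lemma polyfn_A: "polyfn heis_coords (\<lambda>g. A m g v $ k)"
proof -
  have "polyfn heis_coords (\<lambda>g. co (A m g v) j)" for j
    by (cases j) (simp_all, (intro polyfn.add polyfn.mult polyfn.const hc_x hc_y polyfn_aa polyfn_Bf)+)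
  then show ?thesis by (simp add: vec_co)
qed

definition rho :: "complex \<Rightarrow> 'n heis \<Rightarrow> complex^'v^'v" where
  "rho m g = (\<chi> i j. A m g (axis j 1) $ i)"

lemma rho_mult: "rho m g *v v = A m g v"
proof -
  have "A m g v = A m g (\<Sum>j\<in>UNIV. v $ j *s axis j 1)" by (simp add: basis_expansion)
  also have "\<dots> = (\<Sum>j\<in>UNIV. v $ j *s A m g (axis j 1))" by (simp add: A_sum A_smult)
  finally show ?thesis
    by (simp add: rho_def matrix_vector_mult_def vec_eq_iff mult.commute)
qed

lemma rho_comp: "rho m g ** rho m h = rho m (hmul g h)"
  by (simp add: matrix_eq matrix_vector_mul_assoc[symmetric] rho_mult A_hmul)

lemma rho_hunit: "rho m hunit = mat 1"
  by (simp add: matrix_eq rho_mult)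

lemma rho_invertible: "invertible (rho m g)"
  unfolding invertible_def
  by (rule exI[of _ "rho m (hinv g)"]) (simp add: rho_comp hmul_hinv1 hmul_hinv2 rho_hunit)

definition act :: "complex \<Rightarrow> ('n, 'v) haction" where
  "act m g S = A m g ` S"

lemma act_line: "act m g (line v) = line (A m g v)"
  unfolding act_def by (rule line_image) (simp add: A_smult)

lemma act_hmul: "act m (hmul g h) S = act m g (act m h S)"
  by (simp add: act_def image_image A_hmul)

lemma act_hunit[simp]: "act m hunit S = S"
  by (simp add: act_def)

lemma act_inv1[simp]: "act m (hinv g) (act m g S) = S"
  by (simp add: act_def image_image)

lemma alg: "alg_action (act m)"
  unfolding alg_action_def
proof (intro conjI allI ballI impI)
  show "\<exists>\<rho>. (\<forall>i j. polyfn heis_coords (\<lambda>g. \<rho> g $ i $ j)) \<and> (\<forall>g. invertible (\<rho> g)) \<and>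
      (\<forall>g v. v \<noteq> 0 \<longrightarrow> act m g (line v) = line (\<rho> g *v v))"
  proof (rule exI[of _ "rho m"], intro conjI allI impI)
    show "polyfn heis_coords (\<lambda>g. rho m g $ i $ j)" for i j
      unfolding rho_def by (simp add: polyfn_A)
    show "invertible (rho m g)" for g by (rule rho_invertible)
    show "act m g (line v) = line (rho m g *v v)" for g v by (simp add: rho_mult act_line)
  qed
qed (simp_all add: act_hmul)

end


lemma cont_line: "continuous_on UNIV (\<lambda>e::complex. u + e *s (w::complex^'v::finite))"
proof -
  have eq: "(\<lambda>e::complex. u + e *s w) = (\<lambda>e. \<chi> k. u $ k + e * w $ k)" by (simp add: vec_eq_iff fun_eq_iff)
  show ?thesis unfolding eq by (intro continuous_intros)
qed

lemma hom_poly_homog: "hom_poly f \<Longrightarrow> f v = 0 \<Longrightarrow> f (c *s v) = 0"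
  unfolding hom_poly_def by auto

context hc
begin

definition e0 :: "complex^'v" where "e0 = mk (\<lambda>j. if j = Z0 then 1 else 0)"
definition es :: "complex^'v" where "es = mk (\<lambda>j. if j = Sx then 1 else 0)"

lemma co_e0[simp]: "co e0 Z0 = 1" "co e0 (X i) = 0" "co e0 (Y i) = 0" "co e0 Sx = 0"
  by (simp_all add: e0_def)
lemma co_es[simp]: "co es Z0 = 0" "co es (X i) = 0" "co es (Y i) = 0" "co es Sx = 1"
  by (simp_all add: es_def)
lemma zp_e0[simp]: "zp e0 = wzero" by (simp add: zp_def wzero_def vec_eq_iff)
lemma zp_es[simp]: "zp es = wzero" by (simp add: zp_def wzero_def vec_eq_iff)

lemma nonzero_co: "co v j \<noteq> 0 \<Longrightarrow> v \<noteq> 0"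
  by auto

lemma e0_nz: "e0 \<noteq> 0" by (rule nonzero_co[of _ Z0]) simp
lemma es_nz: "es \<noteq> 0" by (rule nonzero_co[of _ Sx]) simp

definition U :: "(complex^'v) set set" where
  "U = {line v | v. v \<noteq> 0 \<and> co v Z0 \<noteq> 0}"

lemma U_sub: "U \<subseteq> proj_space" by (auto simp: U_def proj_space_def)

lemma U_mem: "co v Z0 \<noteq> 0 \<Longrightarrow> line v \<in> U"
  using nonzero_co[of v Z0] by (auto simp: U_def)

lemma U_memD: "x \<in> U \<Longrightarrow> (\<And>v. co v Z0 \<noteq> 0 \<Longrightarrow> x = line v \<Longrightarrow> P) \<Longrightarrow> P"
  by (auto simp: U_def)

lemma line_U_iff: "v \<noteq> 0 \<Longrightarrow> line v \<in> U \<longleftrightarrow> co v Z0 \<noteq> 0"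
proof
  assume "v \<noteq> 0" "line v \<in> U"
  then obtain u where "co u Z0 \<noteq> 0" "line v = line u" by (auto elim: U_memD)
  then obtain c where "c \<noteq> 0" "v = c *s u" using line_eq nonzero_co by metis
  then show "co v Z0 \<noteq> 0" using \<open>co u Z0 \<noteq> 0\<close> by simp
qed (rule U_mem)

lemma boundary_ZS: "proj_space - U = ZS {\<lambda>v. co v Z0}"
proof
  show "proj_space - U \<subseteq> ZS {\<lambda>v. co v Z0}"
  proof
    fix x assume "x \<in> proj_space - U"
    then obtain v where "v \<noteq> 0" "x = line v" "x \<notin> U" by (auto elim: proj_spaceE)
    then show "x \<in> ZS {\<lambda>v. co v Z0}" using line_U_iff by (auto simp: ZS_def)
  qed
  show "ZS {\<lambda>v. co v Z0} \<subseteq> proj_space - U"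
  proof
    fix x assume "x \<in> ZS {\<lambda>v. co v Z0}"
    then obtain v where "v \<noteq> 0" "x = line v" "co v Z0 = 0" by (auto simp: ZS_def)
    then show "x \<in> proj_space - U" using line_U_iff by (auto simp: proj_space_def)
  qed
qed

lemma zopen_U: "zopen U"
  unfolding zopen_def boundary_ZS using U_sub zclosed_ZS hom_poly_co by blast

lemma density:
  assumes C: "zclosed (C :: (complex^'v) set set)" and sub: "\<And>v. co v Z0 \<noteq> 0 \<Longrightarrow> line v \<in> C"
  shows "proj_space \<subseteq> C"
proof
  fix x :: "(complex^'v) set" assume "x \<in> proj_space"
  then obtain u where u: "u \<noteq> 0" "x = line u" by (auto elim: proj_spaceE)
  from C obtain F where F: "\<And>f. f \<in> F \<Longrightarrow> hom_poly f" and CF: "C = ZS F" by (auto elim: zclosedE)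
  have "\<forall>f\<in>F. f u = 0"
  proof
    fix f assume fF: "f \<in> F"
    have van: "f v = 0" if "co v Z0 \<noteq> 0" for v
      using sub[OF that] ZS_mem[OF F nonzero_co[OF that]] fF CF by auto
    show "f u = 0"
    proof (cases "co u Z0 = 0")
      case False
      then show ?thesis using van by blast
    next
      case True
      have "continuous_on UNIV (\<lambda>e. f (u + e *s e0))"
        by (rule continuous_on_compose2[OF hom_poly_cont[OF F[OF fF]] cont_line]) auto
      moreover have "f (u + e *s e0) = 0" if "e \<noteq> 0" for e
        using van[of "u + e *s e0"] that True by simp
      ultimately have "f (u + 0 *s e0) = 0" by (rule cont_zero_at0)
      then show ?thesis by simp
    qed
  qed
  then show "x \<in> C" using u CF ZS_mem[OF F] by simp
qed

lemma zdense_U: "zdense U"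
  unfolding zdense_def
proof
  show "zclosure U \<subseteq> proj_space" by (rule zclosure_sub_proj[OF U_sub])
  show "proj_space \<subseteq> zclosure U"
    unfolding zclosure_def using density U_mem by blast
qed

lemma act_e0: "act m g (line e0) = line (A m g e0)" by (rule act_line)

lemma orbit_e0: "orbit (act m) (line e0) = U"
proof
  show "orbit (act m) (line e0) \<subseteq> U"
    by (auto simp: orbit_def act_line intro!: U_mem)
  show "U \<subseteq> orbit (act m) (line e0)"
  proof
    fix x assume "x \<in> U"
    then obtain v where v: "co v Z0 \<noteq> 0" "x = line v" by (auto elim: U_memD)
    define w where "w = wscale (1 / co v Z0) (zp v)"
    define g where "g = (w, co v Sx / co v Z0 - Sf m w w / 2)"
    have "A m g e0 = (1 / co v Z0) *s v"
      using v(1) by (rule_tac vec_eq_co, case_tac j) (simp_all add: g_def w_def aa_def)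
    moreover have "line ((1 / co v Z0) *s v) = line v" using v(1) by (intro line_smult) simp
    ultimately have "act m g (line e0) = x"
      using v(2) by (simp add: act_line)
    then show "x \<in> orbit (act m) (line e0)" by (auto simp: orbit_def)
  qed
qed

lemma orbit_U: assumes "x0 \<in> U" shows "orbit (act m) x0 = U"
proof -
  have "x0 \<in> range (\<lambda>g. act m g (line e0))" using assms orbit_e0[of m] by (simp add: orbit_def)
  then obtain h where h: "x0 = act m h (line e0)" by blast
  show ?thesis
  proof
    show "orbit (act m) x0 \<subseteq> U"
      using orbit_e0 by (auto simp: orbit_def h act_hmul[symmetric])
    show "U \<subseteq> orbit (act m) x0"
    proof
      fix y assume "y \<in> U"
      then have "y \<in> range (\<lambda>g. act m g (line e0))" using orbit_e0[of m] by (simp add: orbit_def)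
      then obtain g where g: "y = act m g (line e0)" by blast
      have "act m (hmul g (hinv h)) x0 = y" by (simp add: h g act_hmul)
      then show "y \<in> orbit (act m) x0" by (auto simp: orbit_def)
    qed
  qed
qed

lemma open_orbit_U:
  assumes x0: "x0 \<in> proj_space" and op: "zopen (orbit (act m) x0)"
  shows "x0 \<in> U"
proof (rule ccontr)
  assume nU: "x0 \<notin> U"
  from x0 obtain v where v: "v \<noteq> 0" "x0 = line v" by (auto elim: proj_spaceE)
  have z: "co v Z0 = 0" using nU v line_U_iff by auto
  have orbsub: "orbit (act m) x0 \<inter> U = {}"
    using z A_nonzero line_U_iff by (auto simp: orbit_def v act_line)
  from op have "zclosed (proj_space - orbit (act m) x0)" by (simp add: zopen_def)
  moreover have "line u \<in> proj_space - orbit (act m) x0" if "co u Z0 \<noteq> 0" for u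
    using U_mem[OF that] U_sub orbsub by blast
  ultimately have "proj_space \<subseteq> proj_space - orbit (act m) x0" by (rule density)
  moreover have "x0 \<in> orbit (act m) x0" unfolding orbit_def
    by (rule range_eqI[where x=hunit]) simp
  ultimately show False using x0 by blast
qed

lemma stab: "x \<in> U \<Longrightarrow> stab_trivial (act m) x"
  unfolding stab_trivial_def
proof (intro allI impI)
  fix g assume "x \<in> U" and fx: "act m g x = x"
  then obtain v where v: "co v Z0 \<noteq> 0" "x = line v" by (auto elim: U_memD)
  then have "line (A m g v) = line v" using fx by (simp add: act_line)
  then obtain c where c: "A m g v = c *s v" using line_eq nonzero_co[OF v(1)] by blast
  from arg_cong[OF c, of "\<lambda>u. co u Z0"] v have c1: "c = 1" by simp
  have wx: "fst (fst g) $ i = 0" for i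
    using arg_cong[OF c, of "\<lambda>u. co u (X i)"] v c1 by simp
  have wy: "snd (fst g) $ i = 0" for i
    using arg_cong[OF c, of "\<lambda>u. co u (Y i)"] v c1 by simp
  have w: "fst g = wzero" using wx wy by (simp add: wzero_def prod_eq_iff vec_eq_iff)
  have "co v Z0 * aa m g = 0"
    using arg_cong[OF c, of "\<lambda>u. co u Sx"] c1 w by simp
  then have "snd g = 0" using v w by (simp add: aa_def)
  then show "g = hunit" using w by (simp add: hunit_def prod_eq_iff)
qed

lemma H_struct: "H_structure (act m)"
  unfolding H_structure_def
proof (intro conjI)
  show "alg_action (act m)" by (rule alg)
  show "\<exists>U. zopen U \<and> U \<noteq> {} \<and> (\<forall>x\<in>U. stab_trivial (act m) x)"
    using zopen_U U_mem[of e0] stab by auto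
  show "\<exists>x0\<in>proj_space. zopen (orbit (act m) x0) \<and> zdense (orbit (act m) x0)"
    using orbit_e0[of m] zopen_U zdense_U U_mem[of e0] U_sub by (intro bexI[of _ "line e0"]) auto
qed

lemma T_fix: "T_fixes_boundary (act m)"
  unfolding T_fixes_boundary_def
proof (intro ballI impI)
  fix x0 x assume x0: "x0 \<in> proj_space" "zopen (orbit (act m) x0)" and x: "x \<in> proj_space - orbit (act m) x0"
  have "orbit (act m) x0 = U" using open_orbit_U[OF x0] orbit_U by blast
  then obtain v where v: "v \<noteq> 0" "x = line v" "co v Z0 = 0"
    using x boundary_ZS by (auto simp: ZS_def)
  have "A m hT v = v"
    by (rule vec_eq_co, case_tac j) (simp_all add: v hT_def)
  then show "act m hT x = x" by (simp add: v act_line)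
qed

end


lemma wscale_wzero[simp]: "wscale c wzero = wzero"
  by (simp add: wscale_def wzero_def)

context hc
begin

lemma A_center: "A m (wzero, s) v = v + (s * co v Z0) *s es"
  by (rule vec_eq_co, case_tac j) (simp_all add: aa_def)

lemma induced: "induced_tautological (act m)"
  unfolding induced_tautological_def
proof (intro ballI impI)
  fix x0 assume x0: "x0 \<in> proj_space" "zopen (orbit (act m) x0)"
  then have "x0 \<in> U" by (rule open_orbit_U)
  then obtain v where v: "co v Z0 \<noteq> 0" "x0 = line v" by (auto elim: U_memD)
  define z0 where "z0 = co v Z0"
  have z0: "z0 \<noteq> 0" using v by (simp add: z0_def)
  have vz: "co v Z0 = z0" by (simp add: z0_def)
  define R where "R = range (\<lambda>s. act m (wzero, s) x0)"
  have R: "R = range (\<lambda>s. line (v + (s * z0) *s es))"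
    by (simp add: R_def v act_line A_center vz)
  define F where "F = {(\<lambda>u. co u (X i) * z0 - co v (X i) * co u Z0) | i. True} \<union>
                      {(\<lambda>u. co u (Y i) * z0 - co v (Y i) * co u Z0) | i. True}"
  have Fh: "\<And>g. g \<in> F \<Longrightarrow> hom_poly g" unfolding F_def co_def using hom_poly_lin2 by auto
  define K where "K = ZS F"
  have Kmem: "line u \<in> K \<longleftrightarrow> (\<forall>i. co u (X i) * z0 - co v (X i) * co u Z0 = 0 \<and>
                   co u (Y i) * z0 - co v (Y i) * co u Z0 = 0)" if "u \<noteq> 0" for u
  proof -
    have "line u \<in> K \<longleftrightarrow> (\<forall>g\<in>F. g u = 0)" unfolding K_def by (rule ZS_mem[OF Fh that])
    also have "\<dots> \<longleftrightarrow> (\<forall>i. co u (X i) * z0 - co v (X i) * co u Z0 = 0 \<and>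
                   co u (Y i) * z0 - co v (Y i) * co u Z0 = 0)"
    proof
      assume h: "\<forall>g\<in>F. g u = 0"
      show "\<forall>i. co u (X i) * z0 - co v (X i) * co u Z0 = 0 \<and> co u (Y i) * z0 - co v (Y i) * co u Z0 = 0"
      proof
        fix i
        have "(\<lambda>u. co u (X i) * z0 - co v (X i) * co u Z0) \<in> F" "(\<lambda>u. co u (Y i) * z0 - co v (Y i) * co u Z0) \<in> F"
          unfolding F_def by blast+
        then show "co u (X i) * z0 - co v (X i) * co u Z0 = 0 \<and> co u (Y i) * z0 - co v (Y i) * co u Z0 = 0"
          using h by fastforce
      qed
    next
      assume "\<forall>i. co u (X i) * z0 - co v (X i) * co u Z0 = 0 \<and> co u (Y i) * z0 - co v (Y i) * co u Z0 = 0"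
      then show "\<forall>g\<in>F. g u = 0" unfolding F_def by auto
    qed
    finally show ?thesis .
  qed
  have Rnz: "v + (s * z0) *s es \<noteq> 0" for s
    by (rule nonzero_co[of _ Z0]) (simp add: z0 vz)
  have RK: "R \<subseteq> K"
  proof
    fix x assume "x \<in> R"
    then obtain s where "x = line (v + (s * z0) *s es)" by (auto simp: R)
    then show "x \<in> K" using Kmem[OF Rnz] by (simp add: vz mult.commute)
  qed
  have Kcase: "line u \<in> R \<or> line u = line es" if u: "u \<noteq> 0" "line u \<in> K" for u
  proof (cases "co u Z0 = 0")
    case False
    define c where "c = co u Z0 / z0"
    have c: "c \<noteq> 0" using False z0 by (simp add: c_def)
    define s where "s = (co u Sx - c * co v Sx) / (c * z0)"
    have eqs: "\<forall>i. co u (X i) * z0 - co v (X i) * co u Z0 = 0 \<and> co u (Y i) * z0 - co v (Y i) * co u Z0 = 0"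
      using Kmem u by blast
    have "u = c *s (v + (s * z0) *s es)"
    proof (rule vec_eq_co)
      fix j show "co u j = co (c *s (v + (s * z0) *s es)) j"
      proof (cases j)
        case Z0 then show ?thesis using z0 by (simp add: c_def vz)
      next
        case (X i) then show ?thesis using eqs[rule_format, of i] z0
          by (simp add: c_def vz field_simps)
      next
        case (Y i) then show ?thesis using eqs[rule_format, of i] z0
          by (simp add: c_def vz field_simps)
      next
        case Sx then show ?thesis using z0 c by (simp add: s_def field_simps)
      qed
    qed
    then have "line u = line (v + (s * z0) *s es)" using line_smult[OF c, of "v + (s * z0) *s es"] by metis
    then show ?thesis by (auto simp: R)
  next
    case True
    have eqs: "\<forall>i. co u (X i) * z0 - co v (X i) * co u Z0 = 0 \<and> co u (Y i) * z0 - co v (Y i) * co u Z0 = 0"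
      using Kmem u by blast
    have ue: "u = co u Sx *s es"
    proof (rule vec_eq_co)
      fix j show "co u j = co (co u Sx *s es) j"
        using eqs True z0 by (cases j) auto
    qed
    then have "co u Sx \<noteq> 0" using u by auto
    then have "line u = line es" using line_smult ue by metis
    then show ?thesis by simp
  qed
  have esC: "line es \<in> C" if C: "zclosed C" "R \<subseteq> C" for C
  proof -
    from C obtain F' where F': "\<And>f. f \<in> F' \<Longrightarrow> hom_poly f" and CF: "C = ZS F'" by (auto elim: zclosedE)
    have "\<forall>g\<in>F'. g es = 0"
    proof
      fix g assume gF: "g \<in> F'"
      have vanR: "g (v + (s * z0) *s es) = 0" for s
      proof -
        have "line (v + (s * z0) *s es) \<in> C" using C(2) by (auto simp: R)
        then show ?thesis using ZS_mem[OF F' Rnz] CF gF by auto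
      qed
      have "continuous_on UNIV (\<lambda>e. g (es + e *s v))"
        by (rule continuous_on_compose2[OF hom_poly_cont[OF F'[OF gF]] cont_line]) auto
      moreover have "g (es + e *s v) = 0" if e: "e \<noteq> 0" for e
      proof -
        have "es + e *s v = e *s (v + ((1 / (e * z0)) * z0) *s es)"
          using e z0 by (simp add: vec_eq_iff algebra_simps)
        moreover have "g (e *s (v + ((1 / (e * z0)) * z0) *s es)) = 0"
          by (rule hom_poly_homog[OF F'[OF gF] vanR])
        ultimately show ?thesis by (simp add: add.commute)
      qed
      ultimately have "g (es + 0 *s v) = 0" by (rule cont_zero_at0)
      then show "g es = 0" by simp
    qed
    then show ?thesis using CF ZS_mem[OF F' es_nz] by simp
  qed
  have esK: "line es \<in> K" using Kmem[OF es_nz] by simp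
  have esR: "line es \<notin> R"
  proof
    assume "line es \<in> R"
    then obtain s where "line es = line (v + (s * z0) *s es)" by (auto simp: R)
    then obtain c where "c \<noteq> 0" and ce: "es = c *s (v + (s * z0) *s es)" using line_eq Rnz by blast
    from ce have "co es Z0 = co (c *s (v + (s * z0) *s es)) Z0" by (rule arg_cong)
    then have "0 = c * z0" by (simp add: vz)
    then show False using \<open>c \<noteq> 0\<close> z0 by simp
  qed
  have clos: "zclosure R = K"
  proof
    have "zclosed K" unfolding K_def by (rule zclosed_ZS[OF Fh])
    then show "zclosure R \<subseteq> K" using RK unfolding zclosure_def by blast
    show "K \<subseteq> zclosure R"
      unfolding zclosure_def
    proof (intro Inter_greatest subsetI, clarify)
      fix x C assume xK: "x \<in> K" and C: "zclosed C" "R \<subseteq> C"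
      from xK obtain u where u: "u \<noteq> 0" "x = line u" by (auto simp: K_def ZS_def)
      then show "x \<in> C" using Kcase[of u] xK esC[OF C] C(2) by auto
    qed
  qed
  have diff: "zclosure R - R = {line es}"
  proof
    show "zclosure R - R \<subseteq> {line es}"
    proof
      fix x assume "x \<in> zclosure R - R"
      then have xK: "x \<in> K" "x \<notin> R" using clos by auto
      from xK obtain u where u: "u \<noteq> 0" "x = line u" by (auto simp: K_def ZS_def)
      then show "x \<in> {line es}" using Kcase[of u] xK by auto
    qed
    show "{line es} \<subseteq> zclosure R - R" using esK esR clos by auto
  qed
  define pp :: "complex^'v \<Rightarrow> complex \<times> 'n wsp" where "pp u = (co u Z0, zp u)" for u
  have lin: "clinear_VW pp"
    unfolding clinear_VW_def pp_def by (simp add: zp_add zp_smult)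
  have sur0: "y \<in> range pp" for y :: "complex \<times> 'n wsp"
  proof -
    obtain c x1 y1 where y: "y = (c, (x1, y1))" by (cases y) auto
    define u where "u = mk (\<lambda>j. case j of Z0 \<Rightarrow> c | X i \<Rightarrow> x1 $ i | Y i \<Rightarrow> y1 $ i | Sx \<Rightarrow> 0)"
    have "pp u = y" by (simp add: pp_def u_def y zp_def vec_eq_iff)
    then show "y \<in> range pp" by auto
  qed
  have sur: "surj pp" using sur0 by auto
  have ker: "pp u = (0, wzero) \<longleftrightarrow> u \<in> line es" for u
  proof
    assume h: "pp u = (0, wzero)"
    then have hz: "co u Z0 = 0" "zp u = wzero" by (auto simp: pp_def)
    have hx: "co u (X i) = 0" "co u (Y i) = 0" for i
      using arg_cong[OF hz(2), of "\<lambda>w. fst w $ i"] arg_cong[OF hz(2), of "\<lambda>w. snd w $ i"] by simp_all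
    have "u = co u Sx *s es"
      by (rule vec_eq_co, case_tac j) (simp_all add: hz hx)
    then show "u \<in> line es" by (auto simp: mem_line)
  next
    assume "u \<in> line es"
    then obtain c where "u = c *s es" by (auto simp: mem_line)
    then show "pp u = (0, wzero)" by (simp add: pp_def zp_smult)
  qed
  have cw: "clinear_W (id :: 'n wsp \<Rightarrow> 'n wsp)" by (simp add: clinear_W_def)
  have fin: "\<exists>c. c \<noteq> 0 \<and> pp u' = (c * fst (pp u),
                          wscale c (wadd (snd (pp u)) (wscale (fst (pp u)) (id w))))"
    if "u \<notin> line es" "act m (w, t) (line u) = line u'" for w t u u'
  proof -
    have "u \<noteq> 0" using that(1) by (auto simp: mem_line intro: exI[of _ 0])
    then have nz: "A m (w, t) u \<noteq> 0" by (rule A_nonzero)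
    have "line u' = line (A m (w, t) u)" using that(2) by (simp add: act_line)
    then obtain c where c: "c \<noteq> 0" "u' = c *s A m (w, t) u" using line_eq[OF _ nz] by blast
    then show ?thesis
      by (intro exI[of _ c]) (simp add: pp_def zp_smult zp_A)
  qed
  show "\<exists>vh. vh \<noteq> 0 \<and>
          zclosure (range (\<lambda>s. act m (wzero, s) x0)) - range (\<lambda>s. act m (wzero, s) x0) = {line vh} \<and>
          (\<exists>p L. clinear_VW p \<and> surj p \<and> (\<forall>u. p u = (0, wzero) \<longleftrightarrow> u \<in> line vh) \<and>
                 clinear_W L \<and> bij L \<and>
                 (\<forall>w t u u'. u \<notin> line vh \<longrightarrow> act m (w, t) (line u) = line u' \<longrightarrow>
                     (\<exists>c. c \<noteq> 0 \<and> p u' = (c * fst (p u),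
                          wscale c (wadd (snd (p u)) (wscale (fst (p u)) (L w)))))))"
    using es_nz diff[unfolded R_def] lin sur ker cw fin
    by (intro exI[of _ es] conjI exI[of _ pp] exI[of _ "id :: 'n wsp \<Rightarrow> 'n wsp"]) auto
qed

end


lemma sum_axis: "(\<Sum>k\<in>UNIV. axis i (1::complex) $ k * g k) = g i"
proof -
  have "(\<Sum>k\<in>UNIV. axis i (1::complex) $ k * g k) = (\<Sum>k\<in>UNIV. if k = i then g k else 0)"
    by (rule sum.cong) (simp_all add: axis_def)
  then show ?thesis by simp
qed

lemma omega_ax1: "omega (axis i 1, 0) z = snd z $ i"
  by (simp add: omega_def sum_axis)
lemma omega_ax2: "omega (0, axis i 1) z = - fst z $ i"
  by (simp add: omega_def sum_axis sum_negf)
lemma omega_ax1': "omega z (axis i 1, 0) = - snd z $ i"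
  using omega_anti[of z "(axis i 1, 0)"] by (simp add: omega_ax1)
lemma omega_ax2': "omega z (0, axis i 1) = fst z $ i"
  using omega_anti[of z "(0, axis i 1)"] by (simp add: omega_ax2)

lemma axis_same[simp]: "axis i (1::complex) $ i = 1" by (simp add: axis_def)
lemma axis_other[simp]: "k \<noteq> i \<Longrightarrow> axis i (1::complex) $ k = 0" by (simp add: axis_def)

lemma nondeg:
  fixes z :: "('n::finite) wsp"
  assumes B: "\<And>w. Bf m w z = 0" and m: "m^2 \<noteq> 1"
  shows "z = wzero"
proof -
  have m1: "m \<noteq> 1" "m \<noteq> -1" using m by auto
  have "fst z $ i = 0 \<and> snd z $ i = 0" for i
  proof (cases "i = i0")
    case True
    have "snd z $ i / 2 + m / 2 * snd z $ i = 0"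
      using B[of "(axis i 1, 0)"] True by (simp add: Bf_def omega_ax1 Sf_def)
    then have "(1 + m) * snd z $ i = 0" by (simp add: field_simps)
    moreover have "- fst z $ i / 2 + m / 2 * fst z $ i = 0"
      using B[of "(0, axis i 1)"] True by (simp add: Bf_def omega_ax2 Sf_def)
    then have "(m - 1) * fst z $ i = 0" by (simp add: field_simps)
    moreover have "1 + m \<noteq> 0" "m - 1 \<noteq> 0" using m1 by (auto simp: add_eq_0_iff)
    ultimately show ?thesis by simp
  next
    case False
    have "snd z $ i / 2 = 0"
      using B[of "(axis i 1, 0)"] False by (simp add: Bf_def omega_ax1 Sf_def)
    moreover have "- fst z $ i / 2 = 0"
      using B[of "(0, axis i 1)"] False by (simp add: Bf_def omega_ax2 Sf_def)
    ultimately show ?thesis by simp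
  qed
  then show ?thesis by (simp add: wzero_def prod_eq_iff vec_eq_iff)
qed

lemma scalar_map:
  fixes M :: "complex^'v::finite \<Rightarrow> complex^'v"
  assumes add: "\<And>u w. M (u + w) = M u + M w" and sm: "\<And>c u. M (c *s u) = c *s M u"
    and ev: "\<And>u. \<exists>c. M u = c *s u"
  shows "\<exists>l. \<forall>u. M u = l *s u"
proof -
  obtain k :: 'v where True by blast
  define v0 :: "complex^'v" where "v0 = axis k 1"
  obtain l where l: "M v0 = l *s v0" using ev by blast
  have "M w = l *s w" for w
  proof -
    obtain cw where cw: "M w = cw *s w" using ev by blast
    obtain c where c: "M (v0 + w) = c *s (v0 + w)" using ev by blast
    have E: "c * v0 $ i + c * w $ i = l * v0 $ i + cw * w $ i" for i
      using arg_cong[OF c, of "\<lambda>x. x $ i"] by (simp add: add l cw algebra_simps)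
    show ?thesis
    proof (cases "cw = c")
      case True
      have "c = l" using E[of k] True by (simp add: v0_def)
      then show ?thesis using cw True by simp
    next
      case False
      define t where "t = (l - c) / (c - cw)"
      have "w = t *s v0"
      proof (subst vec_eq_iff, intro allI)
        fix i
        have "(c - cw) * w $ i = (l - c) * v0 $ i" using E[of i] by (simp add: algebra_simps)
        then show "w $ i = (t *s v0) $ i" using False by (simp add: t_def field_simps)
      qed
      then have "M w = t *s (l *s v0)" by (simp add: sm l)
      also have "\<dots> = l *s (t *s v0)" by (simp add: vector_smult_assoc mult.commute)
      finally show ?thesis using \<open>w = t *s v0\<close> by simp
    qed
  qed
  then show ?thesis by blast
qed

lemma final_alg:
  fixes \<pi> :: "('n::finite) wsp \<Rightarrow> 'n wsp"
  assumes sur: "\<And>y. \<exists>x. \<pi> x = y" and k: "k \<noteq> 0" and m1: "m1 \<noteq> 0" and m2: "m2 \<noteq> 0"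
    and Om: "\<And>w z. omega (\<pi> w) (\<pi> z) = k * omega w z"
    and SS: "\<And>w z. Sf m2 (\<pi> w) (\<pi> z) = k * Sf m1 w z"
  shows "m1^2 = m2^2"
proof -
  define u :: "'n wsp" where "u = (axis i0 1, 0)"
  define v :: "'n wsp" where "v = (0, axis i0 1)"
  define p where "p = \<pi> u"
  define q where "q = \<pi> v"
  have rad: "omega p r = 0 \<and> omega q r = 0" if r: "fst r $ i0 = 0" "snd r $ i0 = 0" for r
  proof -
    obtain r' where r': "\<pi> r' = r" using sur by blast
    have "Sf m2 r y = 0" for y using r by (simp add: Sf_def)
    then have s1: "Sf m1 r' u = 0" "Sf m1 r' v = 0" using SS[of r' u] SS[of r' v] k r' by auto
    have "snd r' $ i0 = 0" using s1(1) m1 by (simp add: Sf_def u_def)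
    moreover have "fst r' $ i0 = 0" using s1(2) m1 by (simp add: Sf_def v_def)
    ultimately have "omega u r' = 0" "omega v r' = 0" by (simp_all add: u_def v_def omega_ax1 omega_ax2)
    then show ?thesis using Om[of u r'] Om[of v r'] r' by (simp add: p_def q_def)
  qed
  have pz: "fst p $ i = 0 \<and> snd p $ i = 0 \<and> fst q $ i = 0 \<and> snd q $ i = 0" if "i \<noteq> i0" for i
  proof -
    have a: "omega p (axis i 1, 0) = 0 \<and> omega q (axis i 1, 0) = 0" using rad that by simp
    have b: "omega p (0, axis i 1) = 0 \<and> omega q (0, axis i 1) = 0" using rad that by simp
    show ?thesis using a b by (simp add: omega_ax1' omega_ax2')
  qed
  have "omega p q = k" using Om[of u v] by (simp add: p_def q_def u_def v_def omega_ax1)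
  moreover have "omega p q = fst p $ i0 * snd q $ i0 - snd p $ i0 * fst q $ i0"
  proof -
    have "omega p q = (\<Sum>i\<in>{i0}. fst p $ i * snd q $ i - snd p $ i * fst q $ i)"
      unfolding omega_def by (rule sum.mono_neutral_right) (auto simp: pz)
    then show ?thesis by simp
  qed
  ultimately have e1: "fst p $ i0 * snd q $ i0 - snd p $ i0 * fst q $ i0 = k" by simp
  have "Sf m2 p p = 0" using SS[of u u] by (simp add: p_def Sf_def u_def)
  then have e2: "fst p $ i0 * snd p $ i0 = 0" using m2 by (simp add: Sf_def)
  have "Sf m2 q q = 0" using SS[of v v] by (simp add: q_def Sf_def v_def)
  then have e3: "fst q $ i0 * snd q $ i0 = 0" using m2 by (simp add: Sf_def)
  have "Sf m2 p q = k * (m1 / 2)" using SS[of u v] by (simp add: p_def q_def Sf_def u_def v_def)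
  then have "2 * (m2 * (fst p $ i0 * snd q $ i0 + snd p $ i0 * fst q $ i0)) = 2 * (k * m1)"
    by (simp add: Sf_def field_simps)
  then have e4: "m2 * (fst p $ i0 * snd q $ i0 + snd p $ i0 * fst q $ i0) = k * m1"
    by simp
  define a where "a = fst p $ i0"
  define b where "b = snd p $ i0"
  define c where "c = fst q $ i0"
  define d where "d = snd q $ i0"
  have e1': "a * d - b * c = k" and e2': "a * b = 0" and e3': "c * d = 0" and e4': "m2 * (a * d + b * c) = k * m1"
    using e1 e2 e3 e4 by (simp_all add: a_def b_def c_def d_def)
  have "(a * d + b * c)^2 = (a * d - b * c)^2 + 4 * (a * b) * (c * d)" by (simp add: power2_eq_square algebra_simps)
  then have sq: "(a * d + b * c)^2 = k^2" using e1' e2' e3' by simp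
  have "(m2 * (a * d + b * c))^2 = (k * m1)^2" using e4' by simp
  then have "m2^2 * k^2 = k^2 * m1^2" using sq by (simp add: power_mult_distrib)
  then show ?thesis using k by simp
qed



context hc
begin

lemma Bf_scale1: "Bf m (wscale c a) b = c * Bf m a b"
  by (simp add: Bf_def omega_scale1 Sf_scale1 algebra_simps)

lemma smult_solve: "x = l *s z \<Longrightarrow> l \<noteq> 0 \<Longrightarrow> z = (1/l) *s (x::complex^'v)"
  by (simp add: vector_smult_assoc)

lemma A_es[simp]: "A m g es = es"
  by (rule vec_eq_co, case_tac j) simp_all

lemma A_eig:
  assumes e: "A m g u = k *s u" and u: "u \<noteq> 0"
  shows "k = 1"
proof (rule ccontr)
  assume k: "k \<noteq> 1"
  have cz: "co u Z0 = 0" using arg_cong[OF e, of "\<lambda>x. co x Z0"] k by simp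
  have cx: "co u (X i) = 0" for i using arg_cong[OF e, of "\<lambda>x. co x (X i)"] k cz by simp
  have cy: "co u (Y i) = 0" for i using arg_cong[OF e, of "\<lambda>x. co x (Y i)"] k cz by simp
  have "zp u = wzero" using cx cy by (simp add: zp_def wzero_def vec_eq_iff)
  then have cs: "co u Sx = 0" using arg_cong[OF e, of "\<lambda>x. co x Sx"] k cz by simp
  have "u = 0" by (rule vec_eq_co, case_tac j) (simp_all add: cz cx cy cs)
  then show False using u by simp
qed

lemma A_bd: "co v Z0 = 0 \<Longrightarrow> A m g v = v + Bf m (fst g) (zp v) *s es"
  by (rule vec_eq_co, case_tac j) simp_all

definition emb :: "'n wsp \<Rightarrow> complex^'v" where
  "emb w = mk (\<lambda>j. case j of X i \<Rightarrow> fst w $ i | Y i \<Rightarrow> snd w $ i | _ \<Rightarrow> 0)"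

lemma co_emb[simp]: "co (emb w) Z0 = 0" "co (emb w) Sx = 0" "co (emb w) (X i) = fst w $ i" "co (emb w) (Y i) = snd w $ i"
  by (simp_all add: emb_def)
lemma zp_emb[simp]: "zp (emb w) = w" by (simp add: zp_def vec_eq_iff prod_eq_iff)

lemma emb_wzero[simp]: "emb wzero = 0"
  by (rule vec_eq_co, case_tac j) simp_all

lemma emb_add: "emb (wadd a b) = emb a + emb b"
  by (rule vec_eq_co, case_tac j) simp_all
lemma emb_scale: "emb (wscale c a) = c *s emb a"
  by (rule vec_eq_co, case_tac j) simp_all

lemma A_e0: "A m g e0 = e0 + emb (fst g) + aa m g *s es"
  by (rule vec_eq_co, case_tac j) simp_all

lemma recon: "co u Z0 = 0 \<Longrightarrow> u = emb (zp u) + co u Sx *s es"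
  by (rule vec_eq_co, case_tac j) simp_all

lemma wadd_cancel: "wadd a b = wadd a c \<Longrightarrow> b = c"
  by (simp add: wadd_def prod_eq_iff)

lemma inequiv:
  assumes m1: "m1 \<noteq> 0" and m2: "m2 \<noteq> 0" "m2^2 \<noteq> 1"
    and eqv: "equiv_action (act m1) (act m2)"
  shows "m1^2 = m2^2"
proof -
  obtain \<phi> P where bij: "bij \<phi>" and inv: "invertible (P :: complex^'v^'v)"
    and rel: "\<And>g x. x \<in> proj_space \<Longrightarrow> (\<lambda>u. P *v u) ` (act m1 g x) = act m2 (\<phi> g) ((\<lambda>u. P *v u) ` x)"
    using eqv unfolding equiv_action_def by blast
  obtain P' where PP: "P ** P' = mat 1" "P' ** P = mat 1" using inv unfolding invertible_def by blast
  have PP1[simp]: "P *v (P' *v x) = x" for x using PP by (simp add: matrix_vector_mul_assoc)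
  have PP2[simp]: "P' *v (P *v x) = x" for x using PP by (simp add: matrix_vector_mul_assoc)
  have Pinj: "x = y" if "P *v x = P *v y" for x y using PP2[of x] PP2[of y] that by metis
  have Pnz: "P *v x \<noteq> 0" if "x \<noteq> 0" for x using Pinj[of x 0] that by auto
  have Psm[simp]: "P *v (c *s x) = c *s (P *v x)" for c x by (rule vector_scalar_commute)
  have Pad[simp]: "P *v (x + y) = P *v x + P *v y" for x y by (rule matrix_vector_right_distrib)
  have P'sm: "P' *v (c *s x) = c *s (P' *v x)" for c x by (rule vector_scalar_commute)
  have P'ad: "P' *v (x + y) = P' *v x + P' *v y" for x y by (rule matrix_vector_right_distrib)
  have Pline: "(\<lambda>u. P *v u) ` line v = line (P *v v)" for v by (rule line_image) simp
  have sur: "\<exists>g. \<phi> g = g'" for g' using bij by (metis bij_def surj_def)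
  have E1: "\<exists>c. c \<noteq> 0 \<and> P *v A m1 g v = c *s A m2 (\<phi> g) (P *v v)" if v: "v \<noteq> 0" for g v
  proof -
    have "line v \<in> proj_space" using v by (auto simp: proj_space_def)
    from rel[OF this, of g] have "line (P *v A m1 g v) = line (A m2 (\<phi> g) (P *v v))"
      by (simp add: act_line Pline)
    then show ?thesis using line_eq A_nonzero Pnz v by blast
  qed
  have STAR: "P *v A m1 g v = A m2 (\<phi> g) (P *v v)" for g v
  proof -
    define M where "M v = P' *v A m2 (hinv (\<phi> g)) (P *v A m1 g v)" for v
    have Madd: "M (u + w) = M u + M w" for u w by (simp add: M_def A_add P'ad)
    have Msm: "M (c *s u) = c *s M u" for c u by (simp add: M_def A_smult P'sm)
    have Mev: "\<exists>c. M u = c *s u" for u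
    proof (cases "u = 0")
      case True
      then show ?thesis by (simp add: M_def)
    next
      case False
      then obtain c where c: "P *v A m1 g u = c *s A m2 (\<phi> g) (P *v u)" using E1 by blast
      then have "M u = c *s u" by (simp add: M_def A_smult P'sm)
      then show ?thesis by blast
    qed
    obtain l where l: "\<And>u. M u = l *s u" using scalar_map[OF Madd Msm Mev] by blast
    have Pl: "P *v A m1 g u = l *s A m2 (\<phi> g) (P *v u)" for u
    proof -
      have "P *v A m1 g u = A m2 (\<phi> g) (P *v M u)" by (simp add: M_def)
      also have "\<dots> = l *s A m2 (\<phi> g) (P *v u)" by (simp add: l A_smult)
      finally show ?thesis .
    qed
    have esnz: "P *v es \<noteq> 0" using Pnz es_nz by blast
    have "P *v es = l *s A m2 (\<phi> g) (P *v es)" using Pl[of es] by simp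
    then have l0: "l \<noteq> 0" using esnz by auto
    have "A m2 (\<phi> g) (P *v es) = (1 / l) *s (P *v es)"
      using \<open>P *v es = l *s A m2 (\<phi> g) (P *v es)\<close> l0 by (rule smult_solve)
    then have "1 / l = 1" using A_eig esnz by blast
    then have "l = 1" by simp
    then show ?thesis using Pl by simp
  qed
  define q where "q = P *v es"
  have qfix: "A m2 g' q = q" for g'
  proof -
    obtain g where "\<phi> g = g'" using sur by blast
    then show ?thesis using STAR[of g es] by (simp add: q_def)
  qed
  have qz: "co q Z0 = 0"
    using arg_cong[OF qfix[of "((axis i0 1, 0), 0)"], of "\<lambda>x. co x (X i0)"] by simp
  have "Bf m2 w (zp q) = 0" for w
    using arg_cong[OF qfix[of "(w, 0)"], of "\<lambda>x. co x Sx"] qz by simp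
  then have zpq: "zp q = wzero" using nondeg m2(2) by blast
  define \<beta> where "\<beta> = co q Sx"
  have qes: "q = \<beta> *s es" using recon[OF qz] zpq by (simp add: \<beta>_def)
  have \<beta>: "\<beta> \<noteq> 0" using qes Pnz[OF es_nz] by (auto simp: q_def)
  have bd: "co (P *v v) Z0 = 0" if v: "co v Z0 = 0" for v
  proof -
    obtain g where g: "\<phi> g = ((axis i0 1, 0), 0)" using sur by blast
    have "P *v A m1 g v = P *v v + (Bf m1 (fst g) (zp v) * \<beta>) *s es"
      using v by (simp add: A_bd q_def[symmetric] qes vector_smult_assoc)
    then have "A m2 ((axis i0 1, 0), 0) (P *v v) = P *v v + (Bf m1 (fst g) (zp v) * \<beta>) *s es"
      using STAR[of g v] g by simp
    from arg_cong[OF this, of "\<lambda>x. co x (X i0)"] show ?thesis by simp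
  qed
  have Eb: "Bf m2 (fst (\<phi> g)) (zp (P *v v)) = \<beta> * Bf m1 (fst g) (zp v)" if v: "co v Z0 = 0" for g v
  proof -
    have "P *v v + (Bf m1 (fst g) (zp v) * \<beta>) *s es = P *v v + Bf m2 (fst (\<phi> g)) (zp (P *v v)) *s es"
      using STAR[of g v] v bd[OF v] by (simp add: A_bd q_def[symmetric] qes vector_smult_assoc)
    from arg_cong[OF this, of "\<lambda>x. co x Sx"] show ?thesis by (simp add: mult.commute)
  qed
  define \<pi> where "\<pi> w = zp (P *v emb w)" for w
  define c0 where "c0 = co (P *v e0) Z0"
  have zpPes: "zp (P *v es) = wzero" using zpq by (simp add: q_def)
  have Ec: "\<pi> (fst g) = wscale c0 (fst (\<phi> g))" for g
  proof -
    have "zp (P *v A m1 g e0) = zp (A m2 (\<phi> g) (P *v e0))" using STAR by simp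
    then have "wadd (zp (P *v e0)) (\<pi> (fst g)) = wadd (zp (P *v e0)) (wscale c0 (fst (\<phi> g)))"
      by (simp add: A_e0 zp_add zp_smult zpPes zp_A \<pi>_def c0_def wadd_def)
    then show ?thesis by (rule wadd_cancel)
  qed
  have bvec: "P *v emb w = P *v ((co (P *v emb w) Sx / \<beta>) *s es)" if "\<pi> w = wzero" for w
  proof -
    have "co (P *v emb w) Z0 = 0" by (rule bd) simp
    then have "P *v emb w = emb wzero + co (P *v emb w) Sx *s es"
      using recon[of "P *v emb w"] that by (simp add: \<pi>_def)
    also have "\<dots> = (co (P *v emb w) Sx / \<beta>) *s q"
      using \<beta> by (simp add: qes vector_smult_assoc)
    finally show ?thesis by (simp add: q_def)
  qed
  have \<pi>inj: "w = wzero" if "\<pi> w = wzero" for w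
  proof -
    have "emb w = (co (P *v emb w) Sx / \<beta>) *s es" using Pinj bvec[OF that] by blast
    then have "zp (emb w) = zp ((co (P *v emb w) Sx / \<beta>) *s es)" by simp
    then show ?thesis by (simp add: zp_smult)
  qed
  have c0: "c0 \<noteq> 0"
  proof
    assume "c0 = 0"
    then have "\<pi> (axis i0 1, 0) = wzero" using Ec[of "((axis i0 1, 0), 0)"] by (simp add: wscale_def wzero_def)
    then have "(axis i0 1, 0) = (wzero :: 'n wsp)" by (rule \<pi>inj)
    then have "axis i0 (1::complex) $ i0 = 0" by (simp add: wzero_def)
    then show False by simp
  qed
  have \<pi>add: "\<pi> (wadd a b) = wadd (\<pi> a) (\<pi> b)" for a b by (simp add: \<pi>_def emb_add zp_add)
  have \<pi>sm: "\<pi> (wscale c a) = wscale c (\<pi> a)" for c a by (simp add: \<pi>_def emb_scale zp_smult)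
  have zpP: "zp (P *v v) = \<pi> (zp v)" if "co v Z0 = 0" for v
  proof -
    have "P *v v = P *v emb (zp v) + co v Sx *s q" using recon[OF that] by (metis Pad Psm q_def)
    then show ?thesis by (simp add: zp_add zp_smult zpq \<pi>_def wadd_def)
  qed
  have coP: "co (P *v u) Z0 = c0 * co u Z0" for u
  proof -
    have "u = co u Z0 *s e0 + (u - co u Z0 *s e0)" by simp
    then have "P *v u = co u Z0 *s (P *v e0) + P *v (u - co u Z0 *s e0)" by (metis Pad Psm)
    moreover have "co (P *v (u - co u Z0 *s e0)) Z0 = 0" by (rule bd) simp
    ultimately show ?thesis by (simp add: c0_def mult.commute)
  qed
  have \<pi>sur: "\<exists>x. \<pi> x = y" for y
  proof -
    define v where "v = P' *v emb y"
    have Pv: "P *v v = emb y" by (simp add: v_def)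
    then have "c0 * co v Z0 = 0" using coP[of v] by simp
    then have vz: "co v Z0 = 0" using c0 by simp
    have "\<pi> (zp v) = y" using zpP[OF vz] Pv by simp
    then show ?thesis by blast
  qed
  define \<kappa> where "\<kappa> = c0 * \<beta>"
  have \<kappa>: "\<kappa> \<noteq> 0" using c0 \<beta> by (simp add: \<kappa>_def)
  have KEY: "Bf m2 (\<pi> w) (\<pi> z) = \<kappa> * Bf m1 w z" for w z
  proof -
    have "Bf m2 (fst (\<phi> (w, 0))) (zp (P *v emb z)) = \<beta> * Bf m1 w z"
      using Eb[of "emb z" "(w, 0)"] by simp
    moreover have "fst (\<phi> (w, 0)) = wscale (1 / c0) (\<pi> w)"
      using Ec[of "(w, 0)"] c0 by (simp add: wscale_def vector_smult_assoc)
    ultimately have "Bf m2 (wscale (1 / c0) (\<pi> w)) (\<pi> z) = \<beta> * Bf m1 w z"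
      by (simp add: \<pi>_def)
    then have "(1 / c0) * Bf m2 (\<pi> w) (\<pi> z) = \<beta> * Bf m1 w z"
      by (simp only: Bf_scale1)
    then show ?thesis using c0 by (simp add: \<kappa>_def field_simps)
  qed
  have Om: "omega (\<pi> w) (\<pi> z) = \<kappa> * omega w z" for w z
  proof -
    have "Bf m2 (\<pi> w) (\<pi> z) - Bf m2 (\<pi> z) (\<pi> w) = \<kappa> * (Bf m1 w z - Bf m1 z w)"
      by (simp add: KEY algebra_simps)
    then show ?thesis by (simp add: Bf_def omega_anti[of "\<pi> z"] omega_anti[of z] Sf_sym[of m2 "\<pi> z"] Sf_sym[of m1 z] field_simps)
  qed
  have SS: "Sf m2 (\<pi> w) (\<pi> z) = \<kappa> * Sf m1 w z" for w z
  proof -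
    have "Bf m2 (\<pi> w) (\<pi> z) + Bf m2 (\<pi> z) (\<pi> w) = \<kappa> * (Bf m1 w z + Bf m1 z w)"
      by (simp add: KEY algebra_simps)
    then show ?thesis by (simp add: Bf_def omega_anti[of "\<pi> z"] omega_anti[of z] Sf_sym[of m2 "\<pi> z"] Sf_sym[of m1 z] field_simps)
  qed
  show ?thesis by (rule final_alg[OF \<pi>sur \<kappa> m1 m2(1) Om SS])
qed

end


lemma equiv_refl: "equiv_action \<alpha> \<alpha>"
  unfolding equiv_action_def
proof (intro exI conjI allI impI)
  show "bij (id :: 'a heis \<Rightarrow> 'a heis)" by simp
  show "id (hmul g h) = hmul (id g) (id h)" for g h by simp
  show "invertible (mat 1 :: complex^'v^'v)" unfolding invertible_def by (rule exI[of _ "mat 1"]) simp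
  show "(\<lambda>u. mat 1 *v u) ` (\<alpha> g x) = \<alpha> (id g) ((\<lambda>u. mat 1 *v u) ` x)" for g x by simp
qed

theorem theorem3p12:
  assumes "CARD('v) = 2 * CARD('n) + 2"
  shows "(\<exists>S :: ('n::finite, 'v::finite) haction set. infinite S \<and>
            (\<forall>\<alpha>\<in>S. H_structure \<alpha> \<and> T_fixes_boundary \<alpha> \<and> induced_tautological \<alpha>) \<and>
            (\<forall>\<alpha>\<in>S. \<forall>\<beta>\<in>S. \<alpha> \<noteq> \<beta> \<longrightarrow> \<not> equiv_action \<alpha> \<beta>))
       \<and> (\<exists>S :: ('n::finite, 'v::finite) haction set. infinite S \<and>
            (\<forall>\<alpha>\<in>S. H_structure \<alpha>) \<and>
            (\<forall>\<alpha>\<in>S. \<forall>\<beta>\<in>S. \<alpha> \<noteq> \<beta> \<longrightarrow> \<not> equiv_action \<alpha> \<beta>))"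
proof -
  have "card (UNIV :: 'v set) = card (UNIV :: 'n ix set)" using assms card_ix[where 'n='n] by simp
  then obtain f :: "'v \<Rightarrow> 'n ix" where "bij_betw f UNIV UNIV"
    using finite_same_card_bij[of "UNIV :: 'v set" "UNIV :: 'n ix set"] by auto
  then have bf: "bij f" by (simp add: bij_betw_def bij_def)
  interpret hc f by standard (rule bf)
  define \<mu> where "\<mu> k = (of_nat k + 2 :: complex)" for k
  have musq: "(\<mu> k)^2 = of_nat ((k + 2)^2)" for k by (simp add: \<mu>_def add.commute)
  have mu0: "\<mu> k \<noteq> 0" for k
  proof -
    have "(of_nat (k + 2) :: complex) \<noteq> 0" by (simp only: of_nat_eq_0_iff)
    then show ?thesis by (simp add: \<mu>_def add.commute)
  qed
  have mu1: "(\<mu> k)^2 \<noteq> 1" for k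
  proof -
    have "(k + 2)^2 \<noteq> (1::nat)" by (simp add: power2_eq_square)
    then show ?thesis unfolding musq by (simp only: of_nat_eq_1_iff) simp
  qed
  have muinj: "k = l" if "(\<mu> k)^2 = (\<mu> l)^2" for k l
  proof -
    have "(k + 2)^2 = (l + 2)^2" using that unfolding musq by (simp only: of_nat_eq_iff)
    then have "k + 2 = l + 2" by (rule power_eq_imp_eq_base) auto
    then show ?thesis by simp
  qed
  have neq: "\<not> equiv_action (act (\<mu> k)) (act (\<mu> l))" if "k \<noteq> l" for k l
    using inequiv[OF mu0 mu0 mu1] muinj that by blast
  define S where "S = range (\<lambda>k. act (\<mu> k))"
  have inj: "inj (\<lambda>k. act (\<mu> k))"
  proof (rule injI)
    fix k l assume "act (\<mu> k) = act (\<mu> l)"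
    then have "equiv_action (act (\<mu> k)) (act (\<mu> l))" using equiv_refl by metis
    then show "k = l" using neq by blast
  qed
  have inf: "infinite S"
  proof
    assume "finite S"
    then have "finite (UNIV :: nat set)" using finite_imageD[of "\<lambda>k. act (\<mu> k)" UNIV] inj by (simp add: S_def)
    then show False by simp
  qed
  have props: "\<forall>\<alpha>\<in>S. H_structure \<alpha> \<and> T_fixes_boundary \<alpha> \<and> induced_tautological \<alpha>"
    by (auto simp: S_def H_struct T_fix induced)
  have ineq: "\<forall>\<alpha>\<in>S. \<forall>\<beta>\<in>S. \<alpha> \<noteq> \<beta> \<longrightarrow> \<not> equiv_action \<alpha> \<beta>"
    using neq by (auto simp: S_def) metis
  show ?thesis using inf props ineq by blast
qed


end
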